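(* Let $F(x)=x^{-1}$ on $GF(2^m)$ (i.e. $F(x)=x^{2^m-2}$, $F(0)=0$) and $S=STS(\mathcal H^n)$. If $m$ is odd, then at every nonzero point $a$ the self-embedding $S\cup F(S)$ has exactly $(2^m-2)/6$ rotation lines, each with $6$ points. If $m$ is even, then at every nonzero point there are exactly $(2^m-4)/6$ rotation lines with $6$ points each and one rotation line with $2$ points.
   Context: $n=2^m-1$. $S=STS(\mathcal H^n)$ is the set of 3-subsets $\{a,b,c\}$ of nonzero elements of $GF(2^m)$ with $a+b+c=0$; $F(S)=\{\{F(a),F(b),F(c)\}:\{a,b,c\}\in S\}$. For nonzero $a$, let $P_a=GF(2^m)\setminus\{0,a\}$, $s_a(y)=a+y$ and $\psi_a(y)=F(F^{-1}(a)+F^{-1}(y))$. The rotation lines at $a$ are the orbits on $P_a$ of the group generated by the involutions $s_a,\psi_a$; the number of points of a rotation line is the size of the orbit. *)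

theory Defs
  imports Main
begin

text \<open>GF(2^m) is modelled by an arbitrary finite field type of cardinality 2^m
  (all such fields are isomorphic). F is a permutation of the field with inverse Finv.\<close>

definition P_pts :: "'a::field \<Rightarrow> 'a set" where
  "P_pts a = UNIV - {0, a}"

definition s_map :: "'a::field \<Rightarrow> 'a \<Rightarrow> 'a" where
  "s_map a y = a + y"

definition psi_map :: "('a::field \<Rightarrow> 'a) \<Rightarrow> ('a \<Rightarrow> 'a) \<Rightarrow> 'a \<Rightarrow> 'a \<Rightarrow> 'a" where
  "psi_map F Finv a y = F (Finv a + Finv y)"

text \<open>One generator step on P_a (s_a or psi_a). Since both are involutions, the
  orbit of y under the group they generate is the set reachable by finitely many steps.\<close>
definition rot_step :: "('a::field \<Rightarrow> 'a) \<Rightarrow> ('a \<Rightarrow> 'a) \<Rightarrow> 'a \<Rightarrow> ('a \<times> 'a) set" where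
  "rot_step F Finv a = {(y, z). y \<in> P_pts a \<and> (z = s_map a y \<or> z = psi_map F Finv a y)}"

definition rot_orbit :: "('a::field \<Rightarrow> 'a) \<Rightarrow> ('a \<Rightarrow> 'a) \<Rightarrow> 'a \<Rightarrow> 'a \<Rightarrow> 'a set" where
  "rot_orbit F Finv a y = {z. (y, z) \<in> (rot_step F Finv a)\<^sup>*}"

definition rotation_lines :: "('a::field \<Rightarrow> 'a) \<Rightarrow> ('a \<Rightarrow> 'a) \<Rightarrow> 'a \<Rightarrow> 'a set set" where
  "rotation_lines F Finv a = rot_orbit F Finv a ` P_pts a"

end

theory Submission
  imports Defs "HOL-Number_Theory.Residues"
begin

locale c2f = fixes a :: "'a::field" assumes c2: "(1::'a) + 1 = 0" and anz: "a \<noteq> 0"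
begin
lemma two0: "(2::'a) = 0" proof - have "(2::'a) = 1 + 1" by simp thus ?thesis using c2 by simp qed
lemma dbl: "x + x = (0::'a)"
proof - have "x*(1+1) = x*1 + x*1" by (rule distrib_left) thus ?thesis using c2 by simp qed

lemma neg: "- x = (x::'a)" using minus_unique[OF dbl[of x]] .
lemma sub: "x - y = (x::'a) + y" by (simp only: diff_conv_add_uminus neg)

lemma P_iff: "y \<in> P_pts a \<longleftrightarrow> y \<noteq> 0 \<and> y \<noteq> a" by (auto simp: P_pts_def)

lemma apy: "y \<in> P_pts a \<Longrightarrow> a + y \<noteq> 0"
proof
  assume h: "y \<in> P_pts a" "a + y = 0"
  have "y = - a" using h(2) add_eq_0_iff[of a y] by blast
  hence "y = a" using neg[of a] by (rule trans)
  thus False using h(1) by (simp add: P_iff)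
qed

lemma s_P: "y \<in> P_pts a \<Longrightarrow> s_map a y \<in> P_pts a"
  using anz apy[of y] by (auto simp: P_iff s_map_def)

lemma psi_eq: "y \<in> P_pts a \<Longrightarrow> psi_map inverse inverse a y = a*y/(a+y)"
  using anz apy[of y] unfolding psi_map_def P_iff by (auto simp: field_simps)

lemma psi_P: "y \<in> P_pts a \<Longrightarrow> psi_map inverse inverse a y \<in> P_pts a"
  using anz apy[of y] psi_eq[of y] by (auto simp: P_iff field_simps)

lemma ss: "s_map a (s_map a y) = y" by (simp add: s_map_def add.assoc[symmetric] dbl)

lemma t1: "y \<in> P_pts a \<Longrightarrow> a*(a+y) + a*y = a*a"
  by (simp add: field_simps two0)

lemma f1: "y \<noteq> 0 \<Longrightarrow> a + y \<noteq> 0 \<Longrightarrow> a*(a*y/(a+y)) / (a + a*y/(a+y)) = y"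
proof -
  assume h: "y \<noteq> 0" "a + y \<noteq> 0"
  have e: "a*(a*a) + a*(a*y) = (a*a)*(a+y)" by (simp add: algebra_simps)
  have d: "a*(a*a) + a*(a*y) \<noteq> 0" unfolding e using h anz by simp
  show ?thesis using anz h d by (simp add: field_simps two0)
qed

lemma f2: "y \<noteq> 0 \<Longrightarrow> a + y \<noteq> 0 \<Longrightarrow> a*(a + a*y/(a+y)) / (a + (a + a*y/(a+y))) = a + a*(a+y)/y"
proof -
  assume h: "y \<noteq> 0" "a + y \<noteq> 0"
  have e: "a*(a*y) + a*(y*y) = (a*y)*(a+y)" by (simp add: algebra_simps)
  have d: "a*(a*y) + a*(y*y) \<noteq> 0" unfolding e using h anz by simp
  show ?thesis using anz h d by (simp add: field_simps two0)
qed

lemma pp: "y \<in> P_pts a \<Longrightarrow> psi_map inverse inverse a (psi_map inverse inverse a y) = y"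
  using psi_eq[of y] psi_eq[OF psi_P[of y]] f1[of y] apy[of y] by (simp add: P_iff)

lemma aay: "a + (a + y) = y" by (simp add: add.assoc[symmetric] dbl)

lemma braid: "y \<in> P_pts a \<Longrightarrow> psi_map inverse inverse a (s_map a (psi_map inverse inverse a y))
   = s_map a (psi_map inverse inverse a (s_map a y))"
  using psi_eq[of y] psi_eq[OF s_P[of y]] psi_eq[OF s_P[OF psi_P[of y]]] f2[of y] apy[of y]
  by (simp add: P_iff s_map_def aay)

lemma eqR: "v \<noteq> 0 \<Longrightarrow> (u = v) = (u + v = (0::'a))"
proof
  assume "u + v = 0" thus "u = v" using add_eq_0_iff[of u v] neg[of u] by simp
qed (simp add: dbl)

lemma sqa: "y*y + a*a \<noteq> 0 \<or> y = a"
proof -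
  have "(y+a)*(y+a) = y*y + a*a + (a*y + a*y)" by (simp add: algebra_simps)
  hence "(y+a)*(y+a) = y*y + a*a" by (simp add: dbl)
  moreover have "y + a = 0 \<Longrightarrow> y = a" using add_eq_0_iff[of y a] neg[of a] by simp
  ultimately show ?thesis by auto
qed

lemma distinct6:
  assumes "y \<noteq> 0" "y \<noteq> a" "y*y + a*y + a*a \<noteq> 0"
  shows "distinct [y, a+y, a*y/(a+y), a + a*y/(a+y), a*(a+y)/y, a + a*(a+y)/y]"
proof -
  have h: "a + y \<noteq> 0" using apy[of y] assms by (simp add: P_iff)
  have r1: "a*(y*y + a*y + a*a) \<noteq> 0" using assms anz by simp
  have r2: "y*y + a*a \<noteq> 0" using sqa assms by auto
  have r3: "a*(y*y + a*a) \<noteq> 0" using r2 anz by simp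
  have "a * y + y * y \<noteq> a * a \<and>
        a * a + a * y \<noteq> y * y \<and>
        y * y \<noteq> a * a \<and>
        a * a + y * y \<noteq> a * y \<and>
        a * (a * a) + a * (a * y) \<noteq> a * (y * y) \<and>
        a * (a * y) \<noteq> a * (a * a) + a * (y * y)"
    using assms anz r1 r2 r3 by (simp add: eqR algebra_simps)
  hence "y * y \<noteq> a * a + a * y" "a * (y * y) \<noteq> a * (a * a) + a * (a * y)" by auto
  thus ?thesis using assms anz h \<open>a * y + y * y \<noteq> a * a \<and> _\<close> by (simp add: field_simps two0)
qed

abbreviation "sa \<equiv> s_map a"
abbreviation "ps \<equiv> psi_map (inverse::'a\<Rightarrow>'a) inverse a"

definition Orb :: "'a \<Rightarrow> 'a set" where
  "Orb y = {y, sa y, ps y, sa (ps y), ps (sa y), sa (ps (sa y))}"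

lemma step_iff: "(y,z) \<in> rot_step inverse inverse a \<longleftrightarrow> y \<in> P_pts a \<and> (z = sa y \<or> z = ps y)"
  by (simp add: rot_step_def)

lemma braid2: "y \<in> P_pts a \<Longrightarrow> ps (sa (ps (sa y))) = sa (ps y)"
  using braid[OF s_P[of y]] ss[of y] by simp

lemma Orb_closed: assumes y: "y \<in> P_pts a" and w: "w \<in> Orb y"
  shows "sa w \<in> Orb y \<and> ps w \<in> Orb y"
  using w y ss pp braid braid2 s_P psi_P unfolding Orb_def by auto

lemma Orb_P: "y \<in> P_pts a \<Longrightarrow> Orb y \<subseteq> P_pts a"
  using s_P psi_P unfolding Orb_def by auto

lemma orbit_eq: assumes y: "y \<in> P_pts a" shows "rot_orbit inverse inverse a y = Orb y"
proof
  show "rot_orbit inverse inverse a y \<subseteq> Orb y"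
  proof
    fix z assume "z \<in> rot_orbit inverse inverse a y"
    hence "(y, z) \<in> (rot_step inverse inverse a)\<^sup>*" by (simp add: rot_orbit_def)
    thus "z \<in> Orb y"
    proof (induction rule: rtrancl_induct)
      case base thus ?case by (simp add: Orb_def)
    next
      case (step w z) thus ?case using Orb_closed[OF y] by (auto simp: step_iff)
    qed
  qed
next
  let ?r = "rot_step inverse inverse a"
  have st: "x \<in> P_pts a \<Longrightarrow> (v, x) \<in> ?r\<^sup>* \<Longrightarrow> (v, sa x) \<in> ?r\<^sup>* \<and> (v, ps x) \<in> ?r\<^sup>*" for v x
    by (auto intro: rtrancl_into_rtrancl simp: step_iff)
  have "(y,y) \<in> ?r\<^sup>*" by simp
  moreover have "(y, sa y) \<in> ?r\<^sup>*" "(y, ps y) \<in> ?r\<^sup>*" using st[OF y] by auto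
  moreover have "(y, sa (ps y)) \<in> ?r\<^sup>*" "(y, ps (sa y)) \<in> ?r\<^sup>*"
    using st[OF psi_P[OF y]] st[OF s_P[OF y]] st[OF y] by auto
  moreover have "(y, sa (ps (sa y))) \<in> ?r\<^sup>*"
    using st[OF psi_P[OF s_P[OF y]]] st[OF s_P[OF y]] st[OF y] by auto
  ultimately show "Orb y \<subseteq> rot_orbit inverse inverse a y"
    unfolding Orb_def rot_orbit_def by auto
qed

lemma step_sym: "(y, z) \<in> rot_step inverse inverse a \<Longrightarrow> (z, y) \<in> rot_step inverse inverse a"
  using s_P psi_P ss pp by (auto simp: step_iff)

lemma orbit_same: assumes "w \<in> rot_orbit inverse inverse a y"
  shows "rot_orbit inverse inverse a w = rot_orbit inverse inverse a y"
proof -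
  let ?r = "rot_step inverse inverse a"
  have yw: "(y, w) \<in> ?r\<^sup>*" using assms by (simp add: rot_orbit_def)
  have "sym ?r" using step_sym by (auto intro: symI)
  hence "sym (?r\<^sup>*)" by (rule sym_rtrancl)
  hence wy: "(w, y) \<in> ?r\<^sup>*" using yw by (auto dest: symD)
  show ?thesis unfolding rot_orbit_def using yw wy by (auto intro: rtrancl_trans)
qed

lemma four0: "(4::'a) = 0"
proof - have "(4::'a) = 2*2" by simp thus ?thesis by (simp add: two0) qed

lemma sum0_eq: "u + v = 0 \<Longrightarrow> u = (v::'a)"
  using add_eq_0_iff[of u v] neg[of u] by simp

lemma card_nonroot: assumes y: "y \<in> P_pts a" and r: "y*y + a*y + a*a \<noteq> 0"
  shows "card (Orb y) = 6"
proof -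
  have h: "a + y \<noteq> 0" using apy[OF y] .
  have yy: "y \<noteq> 0" "y \<noteq> a" using y by (auto simp: P_iff)
  have e1: "sa y = a + y" by (simp add: s_map_def)
  have e2: "ps y = a*y/(a+y)" using psi_eq[OF y] .
  have e3: "ps (sa y) = a*(a+y)/y" using psi_eq[OF s_P[OF y]] by (simp add: s_map_def aay)
  have "Orb y = set [y, a+y, a*y/(a+y), a + a*y/(a+y), a*(a+y)/y, a + a*(a+y)/y]"
    unfolding Orb_def using e1 e2 e3 by (simp add: s_map_def)
  thus ?thesis using distinct_card[OF distinct6[OF yy r]] by simp
qed

lemma root_P: "y*y + a*y + a*a = 0 \<Longrightarrow> y \<in> P_pts a"
proof -
  assume r: "y*y + a*y + a*a = 0"
  have "y \<noteq> 0" using r anz by auto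
  moreover have "y \<noteq> a"
  proof
    assume "y = a"
    hence "a*a + (a*a + a*a) = 0" using r by (simp add: add.assoc)
    thus False using anz by (simp add: dbl)
  qed
  ultimately show ?thesis by (simp add: P_iff)
qed

lemma Orb_root: assumes r: "y*y + a*y + a*a = 0"
  shows "Orb y = {y, sa y}" "card (Orb y) = 2"
proof -
  have y: "y \<in> P_pts a" using root_P[OF r] .
  have h: "a + y \<noteq> 0" using apy[OF y] .
  have yy: "y*y = a*y + a*a" using sum0_eq[of "y*y" "a*y + a*a"] r by (simp add: add.assoc)
  have "(a+y)*(a+y) = a*a + y*y + (a*y + a*y)" by (simp add: algebra_simps)
  also have "\<dots> = a*a + y*y" by (simp add: dbl)
  also have "\<dots> = a*y + (a*a + a*a)" using yy by (simp add: algebra_simps)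
  also have "\<dots> = a*y" by (simp add: dbl)
  finally have sq: "(a+y)*(a+y) = a*y" .
  have "ps y = a*y/(a+y)" using psi_eq[OF y] .
  also have "\<dots> = a + y" using h sq by (simp add: field_simps)
  finally have psy: "ps y = sa y" by (simp add: s_map_def)
  have "ps (sa y) = y" using psy pp[OF y] by simp
  thus "Orb y = {y, sa y}" unfolding Orb_def using psy ss[of y] by auto
  have "sa y \<noteq> y" using anz by (simp add: s_map_def)
  thus "card (Orb y) = 2" unfolding \<open>Orb y = {y, sa y}\<close> by simp
qed

lemma roots2: assumes "y*y + a*y + a*a = 0" "z*z + a*z + a*a = 0"
  shows "z = y \<or> z = sa y"
proof -
  have "(z+y)*(z+y+a) = (z*z + a*z + a*a) + (y*y + a*y + a*a) + (z*y + z*y) + (a*a + a*a)"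
    by (simp add: algebra_simps four0 two0)
  also have "\<dots> = 0" using assms by (simp add: dbl four0)
  finally have "z + y = 0 \<or> z + y + a = 0" by simp
  thus ?thesis
  proof
    assume "z + y = 0" thus ?thesis using sum0_eq by blast
  next
    assume "z + y + a = 0" hence "z + (y + a) = 0" by (simp add: add.assoc)
    hence "z = y + a" by (rule sum0_eq)
    thus ?thesis by (simp add: s_map_def add.commute)
  qed
qed
end

lemma char2:
  assumes "card (UNIV :: 'a::{field,finite} set) = 2 ^ m"
  shows "(1::'a) + 1 = 0"
proof -
  have d: "CHAR('a) dvd 2 ^ m" using CHAR_dvd_CARD[where 'a='a] assms by simp
  have p: "prime CHAR('a)" by (rule prime_CHAR_semidom) (simp add: finite_imp_CHAR_pos)
  have "CHAR('a) dvd 2" using prime_dvd_power[OF p d] .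
  hence "CHAR('a) = 2" using p by (simp add: primes_dvd_imp_eq)
  hence "of_nat 2 = (0::'a)" using of_nat_eq_0_iff_char_dvd[of 2, where 'a='a] by simp
  thus ?thesis by simp
qed

lemma pow2_mod3: "(2::nat)^m mod 3 = (if even m then 1 else 2)"
proof (induction m)
  case 0 thus ?case by simp
next
  case (Suc m)
  have "(2::nat)^Suc m mod 3 = (2 * (2^m mod 3)) mod 3" by (simp add: mod_mult_right_eq)
  thus ?case using Suc by auto
qed

theorem mainTheorem14:
  fixes m :: nat and a :: "'a::{field,finite}"
  assumes card: "card (UNIV :: 'a set) = 2 ^ m"
    and a: "a \<noteq> 0"
  shows "(odd m \<longrightarrow>
            card (rotation_lines inverse inverse a) = (2 ^ m - 2) div 6
          \<and> (\<forall>L \<in> rotation_lines inverse inverse a. card L = 6))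
       \<and> (even m \<longrightarrow>
            (\<exists>L0 \<in> rotation_lines inverse inverse a. card L0 = 2
               \<and> card (rotation_lines inverse inverse a - {L0}) = (2 ^ m - 4) div 6
               \<and> (\<forall>L \<in> rotation_lines inverse inverse a - {L0}. card L = 6)))"
proof -
  interpret c2f a using char2[OF card] a by unfold_locales
  define lines where "lines = rotation_lines inverse inverse a"
  have lines_eq: "lines = Orb ` P_pts a"
    unfolding lines_def rotation_lines_def using orbit_eq by (auto intro: image_cong)
  have fin: "finite lines" by simp
  have U: "\<Union> lines = P_pts a"
  proof
    show "\<Union> lines \<subseteq> P_pts a" using Orb_P unfolding lines_eq by auto
    show "P_pts a \<subseteq> \<Union> lines" unfolding lines_eq Orb_def by auto
  qed
  have D: "pairwise disjnt lines"
  proof (rule pairwiseI)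
    fix L1 L2 assume L: "L1 \<in> lines" "L2 \<in> lines" "L1 \<noteq> L2"
    then obtain y1 y2 where y: "y1 \<in> P_pts a" "y2 \<in> P_pts a"
      "L1 = rot_orbit inverse inverse a y1" "L2 = rot_orbit inverse inverse a y2"
      unfolding lines_def rotation_lines_def by auto
    show "disjnt L1 L2"
    proof (rule ccontr)
      assume "\<not> disjnt L1 L2"
      then obtain w where "w \<in> L1" "w \<in> L2" by (auto simp: disjnt_def)
      hence "L1 = L2" using orbit_same y by metis
      thus False using L by simp
    qed
  qed
  have cP: "card (P_pts a) = 2^m - 2"
  proof -
    have "card (P_pts a) = card (UNIV::'a set) - card {0, a}"
      unfolding P_pts_def by (rule card_Diff_subset) auto
    thus ?thesis using card a by simp
  qed
  have m2: "2^m \<ge> (2::nat)"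
  proof -
    have "card {0, a} \<le> card (UNIV::'a set)" by (rule card_mono) auto
    thus ?thesis using card a by simp
  qed
  have S: "sum card lines = 2^m - 2"
    using card_Union_disjoint[OF D] U cP by simp
  show ?thesis
  proof (cases "\<exists>y. y*y + a*y + a*a = 0")
    case False
    have all6: "\<forall>L\<in>lines. card L = 6"
      unfolding lines_eq using card_nonroot False by auto
    hence "sum card lines = 6 * card lines" by simp
    hence e: "6 * card lines = 2^m - 2" using S by simp
    have "odd m"
    proof (rule ccontr)
      assume "\<not> odd m"
      hence "(2::nat)^m mod 3 = 1" using pow2_mod3 by simp
      moreover have "2^m = 6 * card lines + 2" using e m2 by simp
      ultimately show False by presburger
    qed
    thus ?thesis using e all6 unfolding lines_def by auto
  next
    case True
    then obtain y0 where r0: "y0*y0 + a*y0 + a*a = 0" by blast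
    define L0 where "L0 = Orb y0"
    have L0: "L0 \<in> lines" unfolding lines_eq L0_def using root_P[OF r0] by auto
    have c2': "card L0 = 2" unfolding L0_def using Orb_root(2)[OF r0] .
    have oth: "\<forall>L\<in>lines - {L0}. card L = 6"
    proof
      fix L assume L: "L \<in> lines - {L0}"
      then obtain y where y: "y \<in> P_pts a" "L = Orb y" unfolding lines_eq by auto
      show "card L = 6"
      proof (cases "y*y + a*y + a*a = 0")
        case True
        hence "y = y0 \<or> y = sa y0" using roots2[OF r0] by blast
        hence "y \<in> rot_orbit inverse inverse a y0"
          using orbit_eq[OF root_P[OF r0]] by (auto simp: Orb_def)
        hence "rot_orbit inverse inverse a y = rot_orbit inverse inverse a y0" by (rule orbit_same)
        hence "L = L0" using y orbit_eq[OF y(1)] orbit_eq[OF root_P[OF r0]] L0_def by simp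
        thus ?thesis using L by simp
      next
        case False thus ?thesis using card_nonroot y by simp
      qed
    qed
    have "sum card lines = card L0 + sum card (lines - {L0})"
      using sum.remove[OF fin L0] .
    also have "sum card (lines - {L0}) = 6 * card (lines - {L0})" using oth by simp
    finally have e: "2 + 6 * card (lines - {L0}) = 2^m - 2" using S c2' by simp
    have "even m"
    proof (rule ccontr)
      assume "\<not> even m"
      hence "(2::nat)^m mod 3 = 2" using pow2_mod3 by simp
      moreover have "2^m = 6 * card (lines - {L0}) + 4" using e m2 by simp
      ultimately show False by presburger
    qed
    thus ?thesis using e oth L0 c2' unfolding lines_def by auto
  qed
qed

end
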